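(* Let $\mathcal{H}$ be a $k$-uniform hypertree with $k \geq 3$, and let $\lambda \in \mathbb{C}$ with $\lambda \neq 0$. Then $\lambda$ is an eigenvalue of $\mathcal{H}$ if and only if there exists a vertex set $U \subseteq V(\mathcal{H})$ such that the induced subhypergraph $H = \mathcal{H}[U]$ is connected (hence itself a $k$-uniform hypertree) and $\lambda$ is a root of the matching polynomial $\varphi(H)$.
   Context: A $k$-uniform hypergraph $\mathcal{H}$ on vertex set $[n]$ has normalized adjacency tensor $A=(a_{i_1\dots i_k})$ of order $k$ and dimension $n$, where $a_{i_1 i_2\dots i_k} = \frac{1}{(k-1)!}$ if $\{i_1,\dots,i_k\}$ is an edge of $\mathcal{H}$ and $0$ otherwise. A pair $(\lambda,\mathbf{x})\in\mathbb{C}\times(\mathbb{C}^n\setminus\{0\})$ is an eigenpair (and $\lambda$ an eigenvalue) of $\mathcal{H}$ if $\sum_{i_2,\dots,i_k=1}^n a_{j i_2\dots i_k}x_{i_2}\cdots x_{i_k} = \lambda x_j^{k-1}$ for all $j\in[n]$. A $k$-uniform hypertree is a connected acyclic $k$-uniform hypergraph. For $U\subseteq V(\mathcal{H})$, the induced subhypergraph is $\mathcal{H}[U]=(U,\{e\in E(\mathcal{H}) : e\subseteq U\})$. A $t$-matching of $H$ is a set of $t$ pairwise disjoint edges. The matching polynomial of a $k$-uniform hypergraph $H$ is $\varphi(H)=\sum_{i=0}^{m}(-1)^i|\mathcal{M}_i|\,x^{(m-i)k}$, where $\mathcal{M}_i$ is the set of $i$-matchings of $H$ and $m$ is the maximum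 size of a matching in $H$. *)

theory Defs
  imports Complex_Main "HOL-Computational_Algebra.Polynomial"
begin

definition k_uniform :: "nat \<Rightarrow> 'a set \<Rightarrow> 'a set set \<Rightarrow> bool" where
  "k_uniform k V E \<longleftrightarrow> finite V \<and> (\<forall>e\<in>E. e \<subseteq> V \<and> card e = k)"

definition hg_adj :: "'a set set \<Rightarrow> ('a \<times> 'a) set" where
  "hg_adj E = {(u, v). \<exists>e\<in>E. u \<in> e \<and> v \<in> e}"

definition hg_connected :: "'a set \<Rightarrow> 'a set set \<Rightarrow> bool" where
  "hg_connected V E \<longleftrightarrow> (\<forall>u\<in>V. \<forall>v\<in>V. (u, v) \<in> (hg_adj E)\<^sup>*)"

definition hg_has_cycle :: "'a set set \<Rightarrow> bool" where
  "hg_has_cycle E \<longleftrightarrow> (\<exists>vs es. length vs = length es \<and> length es \<ge> 2 \<and>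
       distinct vs \<and> distinct es \<and> set es \<subseteq> E \<and>
       (\<forall>i < length es. vs ! i \<in> es ! i \<and> vs ! ((i + 1) mod length es) \<in> es ! i))"

definition k_hypertree :: "nat \<Rightarrow> 'a set \<Rightarrow> 'a set set \<Rightarrow> bool" where
  "k_hypertree k V E \<longleftrightarrow> k_uniform k V E \<and> hg_connected V E \<and> \<not> hg_has_cycle E"

definition adj_tensor :: "nat \<Rightarrow> 'a set set \<Rightarrow> 'a list \<Rightarrow> complex" where
  "adj_tensor k E ixs = (if set ixs \<in> E then 1 / of_nat (fact (k - 1)) else 0)"

definition hg_eigenpair :: "nat \<Rightarrow> 'a set \<Rightarrow> 'a set set \<Rightarrow> complex \<Rightarrow> ('a \<Rightarrow> complex) \<Rightarrow> bool" where
  "hg_eigenpair k V E lam x \<longleftrightarrow> (\<exists>v\<in>V. x v \<noteq> 0) \<and>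
     (\<forall>j\<in>V. (\<Sum>ixs\<in>{ixs. set ixs \<subseteq> V \<and> length ixs = k - 1}.
               adj_tensor k E (j # ixs) * (\<Prod>i\<leftarrow>ixs. x i)) = lam * x j ^ (k - 1))"

definition hg_eigenvalue :: "nat \<Rightarrow> 'a set \<Rightarrow> 'a set set \<Rightarrow> complex \<Rightarrow> bool" where
  "hg_eigenvalue k V E lam \<longleftrightarrow> (\<exists>x. hg_eigenpair k V E lam x)"

definition induced_edges :: "'a set set \<Rightarrow> 'a set \<Rightarrow> 'a set set" where
  "induced_edges E U = {e\<in>E. e \<subseteq> U}"

definition matchings :: "'a set set \<Rightarrow> nat \<Rightarrow> 'a set set set" where
  "matchings E i = {M. M \<subseteq> E \<and> card M = i \<and> pairwise disjnt M}"

definition max_matching_size :: "'a set set \<Rightarrow> nat" where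
  "max_matching_size E = Max {i. matchings E i \<noteq> {}}"

definition matching_poly :: "nat \<Rightarrow> 'a set set \<Rightarrow> complex poly" where
  "matching_poly k E = (let m = max_matching_size E in
     (\<Sum>i\<le>m. monom ((-1) ^ i * of_nat (card (matchings E i))) ((m - i) * k)))"

end

theory Submission
  imports Defs "HOL-Combinatorics.Multiset_Permutations"
begin


definition bpath :: "'a set set \<Rightarrow> 'a list \<Rightarrow> 'a set list \<Rightarrow> bool" where
  "bpath F vs es \<longleftrightarrow> length vs = Suc (length es) \<and> distinct vs \<and> distinct es \<and> set es \<subseteq> F \<and>
     (\<forall>i<length es. vs ! i \<in> es ! i \<and> vs ! Suc i \<in> es ! i)"

lemma cycle_of_path:
  assumes "bpath F vs es" "es \<noteq> []" "e \<in> F" "e \<notin> set es" "hd vs \<in> e" "last vs \<in> e"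
  shows "hg_has_cycle F"
  unfolding hg_has_cycle_def
proof (intro exI conjI)
  let ?es = "es @ [e]"
  have L: "length vs = Suc (length es)" using assms(1) by (simp add: bpath_def)
  show "length vs = length ?es" using L by simp
  show "2 \<le> length ?es" using assms(2) by (cases es) auto
  show "distinct vs" using assms(1) by (simp add: bpath_def)
  show "distinct ?es" using assms(1,4) by (simp add: bpath_def)
  show "set ?es \<subseteq> F" using assms(1,3) by (auto simp: bpath_def)
  have vne: "vs \<noteq> []" using L by auto
  show "\<forall>i<length ?es. vs ! i \<in> ?es ! i \<and> vs ! ((i + 1) mod length ?es) \<in> ?es ! i"
  proof (intro allI impI)
    fix i assume i: "i < length ?es"
    show "vs ! i \<in> ?es ! i \<and> vs ! ((i + 1) mod length ?es) \<in> ?es ! i"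
    proof (cases "i < length es")
      case True
      then show ?thesis using assms(1) by (auto simp: bpath_def nth_append)
    next
      case False
      then have ie: "i = length es" using i by simp
      have "vs ! i = last vs" using L ie vne by (simp add: last_conv_nth)
      moreover have "vs ! ((i + 1) mod length ?es) = hd vs" using ie vne by (simp add: hd_conv_nth)
      ultimately show ?thesis using assms ie by (simp add: nth_append)
    qed
  qed
qed

lemma walk_to_path:
  assumes "(a, b) \<in> (hg_adj F)\<^sup>*"
  shows "\<exists>vs es. bpath F vs es \<and> hd vs = a \<and> last vs = b"
  using assms
proof (induction rule: rtrancl_induct)
  case base
  show ?case by (rule exI[of _ "[a]"], rule exI[of _ "[]"]) (simp add: bpath_def)
next
  case (step y z)
  then obtain vs es where P: "bpath F vs es" "hd vs = a" "last vs = y" by blast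
  from step(2) obtain f where f: "f \<in> F" "y \<in> f" "z \<in> f" by (auto simp: hg_adj_def)
  have L: "length vs = Suc (length es)" using P(1) by (simp add: bpath_def)
  have vne: "vs \<noteq> []" using L by auto
  have ylast: "vs ! length es = y" using P(3) L vne by (simp add: last_conv_nth)
  show ?case
  proof (cases "z \<in> set vs")
    case True
    then obtain i where i: "i < length vs" "vs ! i = z" by (auto simp: in_set_conv_nth)
    have "bpath F (take (Suc i) vs) (take i es)"
      using P(1) i L unfolding bpath_def by (auto dest: in_set_takeD)
    moreover have "hd (take (Suc i) vs) = a" using P(2) vne by (simp add: hd_conv_nth)
    moreover have "last (take (Suc i) vs) = z" using i by (simp add: take_Suc_conv_app_nth)
    ultimately show ?thesis by blast
  next
    case zn: False
    show ?thesis
    proof (cases "f \<in> set es")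
      case True
      then obtain i where i: "i < length es" "es ! i = f" by (auto simp: in_set_conv_nth)
      let ?vs = "take (Suc i) vs @ [z]" and ?es = "take (Suc i) es"
      have "bpath F ?vs ?es"
        unfolding bpath_def
      proof (intro conjI allI impI)
        show "length ?vs = Suc (length ?es)" using i L by simp
        show "distinct ?vs" using P(1) zn by (auto simp: bpath_def dest: in_set_takeD)
        show "distinct ?es" using P(1) by (simp add: bpath_def)
        show "set ?es \<subseteq> F" using P(1) by (auto simp: bpath_def dest: in_set_takeD)
        fix j assume j: "j < length ?es"
        then have j': "j \<le> i" using i by simp
        show "?vs ! j \<in> ?es ! j" using P(1) j' i L by (auto simp: bpath_def nth_append)
        show "?vs ! Suc j \<in> ?es ! j"
        proof (cases "j = i")
          case True then show ?thesis using i L f by (simp add: nth_append)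
        next
          case False then show ?thesis using P(1) j' i L by (auto simp: bpath_def nth_append)
        qed
      qed
      moreover have "hd ?vs = a" using P(2) vne by (cases vs) auto
      moreover have "last ?vs = z" by simp
      ultimately show ?thesis by blast
    next
      case fn: False
      let ?vs = "vs @ [z]" and ?es = "es @ [f]"
      have "bpath F ?vs ?es"
        unfolding bpath_def
      proof (intro conjI allI impI)
        show "length ?vs = Suc (length ?es)" using L by simp
        show "distinct ?vs" using P(1) zn by (auto simp: bpath_def)
        show "distinct ?es" using P(1) fn by (simp add: bpath_def)
        show "set ?es \<subseteq> F" using P(1) f by (auto simp: bpath_def)
        fix j assume j: "j < length ?es"
        have "?vs ! j \<in> ?es ! j \<and> ?vs ! Suc j \<in> ?es ! j"
        proof (cases "j = length es")
          case True then show ?thesis using L f ylast by (simp add: nth_append)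
        next
          case False then have "j < length es" using j by simp
          then show ?thesis using P(1) L by (auto simp: bpath_def nth_append)
        qed
        then show "?vs ! j \<in> ?es ! j" "?vs ! Suc j \<in> ?es ! j" by auto
      qed
      moreover have "hd ?vs = a" using P(2) vne by simp
      moreover have "last ?vs = z" by simp
      ultimately show ?thesis by blast
    qed
  qed
qed

lemma path_snoc:
  assumes "bpath F vs es" "y \<notin> set vs" "f \<in> F" "f \<notin> set es" "last vs \<in> f" "y \<in> f"
  shows "bpath F (vs @ [y]) (es @ [f])"
proof -
  have L: "length vs = Suc (length es)" using assms(1) by (simp add: bpath_def)
  have vne: "vs \<noteq> []" using L by auto
  have ylast: "vs ! length es = last vs" using L vne by (simp add: last_conv_nth)
  show ?thesis
    unfolding bpath_def
  proof (intro conjI allI impI)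
    show "length (vs @ [y]) = Suc (length (es @ [f]))" using L by simp
    show "distinct (vs @ [y])" using assms(1,2) by (auto simp: bpath_def)
    show "distinct (es @ [f])" using assms(1,4) by (simp add: bpath_def)
    show "set (es @ [f]) \<subseteq> F" using assms(1,3) by (auto simp: bpath_def)
    fix j assume j: "j < length (es @ [f])"
    have "(vs @ [y]) ! j \<in> (es @ [f]) ! j \<and> (vs @ [y]) ! Suc j \<in> (es @ [f]) ! j"
    proof (cases "j = length es")
      case True then show ?thesis using L assms(5,6) ylast by (simp add: nth_append)
    next
      case False then have "j < length es" using j by simp
      then show ?thesis using assms(1) L by (auto simp: bpath_def nth_append)
    qed
    then show "(vs @ [y]) ! j \<in> (es @ [f]) ! j" "(vs @ [y]) ! Suc j \<in> (es @ [f]) ! j" by auto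
  qed
qed

lemma subpath:
  assumes "bpath F vs es" "i \<le> j" "j \<le> length es"
  shows "bpath F (drop i (take (Suc j) vs)) (drop i (take j es))"
    and "hd (drop i (take (Suc j) vs)) = vs ! i"
    and "last (drop i (take (Suc j) vs)) = vs ! j"
proof -
  have L: "length vs = Suc (length es)" using assms(1) by (simp add: bpath_def)
  show "bpath F (drop i (take (Suc j) vs)) (drop i (take j es))"
    unfolding bpath_def
  proof (intro conjI allI impI)
    show "length (drop i (take (Suc j) vs)) = Suc (length (drop i (take j es)))"
      using L assms by simp
    show "distinct (drop i (take (Suc j) vs))" using assms(1) by (simp add: bpath_def)
    show "distinct (drop i (take j es))" using assms(1) by (simp add: bpath_def)
    show "set (drop i (take j es)) \<subseteq> F" using assms(1)
      by (auto simp: bpath_def dest!: in_set_dropD in_set_takeD)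
    fix l assume l: "l < length (drop i (take j es))"
    then have l': "i + l < length es" "i + l < j" using assms by auto
    have "drop i (take (Suc j) vs) ! l = vs ! (i + l)" using l' L by simp
    moreover have "drop i (take (Suc j) vs) ! Suc l = vs ! Suc (i + l)" using l' L by simp
    moreover have "drop i (take j es) ! l = es ! (i + l)" using l' by simp
    ultimately show "drop i (take (Suc j) vs) ! l \<in> drop i (take j es) ! l"
      "drop i (take (Suc j) vs) ! Suc l \<in> drop i (take j es) ! l"
      using assms(1) l' by (auto simp: bpath_def)
  qed
  show "hd (drop i (take (Suc j) vs)) = vs ! i"
    using L assms by (simp add: hd_conv_nth)
  show "last (drop i (take (Suc j) vs)) = vs ! j"
    using L assms by (simp add: last_conv_nth)
qed

lemma subpath_cycle:
  assumes "bpath F vs es" "i < j" "j \<le> length es" "e \<in> F" "e \<notin> set (drop i (take j es))"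
    "vs ! i \<in> e" "vs ! j \<in> e"
  shows "hg_has_cycle F"
proof -
  note S = subpath[OF assms(1) less_imp_le[OF assms(2)] assms(3)]
  show ?thesis
  proof (rule cycle_of_path[OF S(1) _ assms(4,5)])
    show "drop i (take j es) \<noteq> []" using assms(2,3) by simp
    show "hd (drop i (take (Suc j) vs)) \<in> e" using S(2) assms(6) by simp
    show "last (drop i (take (Suc j) vs)) \<in> e" using S(3) assms(7) by simp
  qed
qed


lemma last_edge_unique:
  assumes P: "bpath F vs es" "es \<noteq> []"
    and mx: "\<forall>vs' es'. bpath F vs' es' \<longrightarrow> length es' \<le> length es"
    and ac: "\<not> hg_has_cycle F" and fin: "\<forall>e\<in>F. finite e \<and> 2 \<le> card e"
    and e': "e' \<in> F" "last vs \<in> e'"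
  shows "e' = last es"
proof (rule ccontr)
  assume ne: "e' \<noteq> last es"
  define m where "m = length es"
  have m1: "m \<ge> 1" using P(2) by (cases es) (auto simp: m_def)
  have L: "length vs = Suc m" using P(1) by (simp add: bpath_def m_def)
  have lv: "last vs = vs ! m" using L by (subst last_conv_nth) auto
  have le: "last es = es ! (m - 1)" using P(2) by (simp add: last_conv_nth m_def)
  have dist: "distinct es" using P(1) by (simp add: bpath_def)
  show False
  proof (cases "e' \<in> set es")
    case True
    then obtain j where j: "j < m" "es ! j = e'" by (auto simp: in_set_conv_nth m_def)
    have jm: "j < m - 1" using j ne le by (cases "j = m - 1") auto
    have "hg_has_cycle F"
    proof (rule subpath_cycle[OF P(1), of "Suc j" m e'])
      show "Suc j < m" using jm by simp
      show "m \<le> length es" by (simp add: m_def)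
      show "e' \<in> F" by fact
      show "e' \<notin> set (drop (Suc j) (take m es))"
      proof
        assume "e' \<in> set (drop (Suc j) (take m es))"
        then obtain l where l: "l < length (drop (Suc j) (take m es))" "drop (Suc j) (take m es) ! l = e'"
          by (auto simp: in_set_conv_nth)
        then have "es ! (Suc j + l) = es ! j" "Suc j + l < length es" using j by (auto simp: m_def)
        then show False using dist j(1) by (simp add: nth_eq_iff_index_eq m_def)
      qed
      show "vs ! Suc j \<in> e'" using P(1) j by (auto simp: bpath_def m_def)
      show "vs ! m \<in> e'" using e'(2) lv by simp
    qed
    then show False using ac by simp
  next
    case eN: False
    have "finite e'" "2 \<le> card e'" using fin e'(1) by auto
    then obtain y where y: "y \<in> e'" "y \<noteq> last vs"
    proof -
      have "card (e' - {last vs}) \<ge> 1" using \<open>finite e'\<close> \<open>2 \<le> card e'\<close> e'(2) by (simp add: card_Diff_singleton)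
      then have "e' - {last vs} \<noteq> {}" by (cases "e' - {last vs} = {}") auto
      then show ?thesis using that by blast
    qed
    show False
    proof (cases "y \<in> set vs")
      case True
      then obtain j where j: "j < Suc m" "vs ! j = y" using L by (auto simp: in_set_conv_nth)
      have jm: "j < m" using j y lv by (cases "j = m") auto
      have "hg_has_cycle F"
      proof (rule subpath_cycle[OF P(1), of j m e'])
        show "j < m" by fact
        show "m \<le> length es" by (simp add: m_def)
        show "e' \<in> F" by fact
        show "e' \<notin> set (drop j (take m es))" using eN by (auto dest: in_set_dropD in_set_takeD)
        show "vs ! j \<in> e'" using j y by simp
        show "vs ! m \<in> e'" using e'(2) lv by simp
      qed
      then show False using ac by simp
    next
      case False
      have "bpath F (vs @ [y]) (es @ [e'])" by (rule path_snoc[OF P(1) False e'(1) eN e'(2) y(1)])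
      then have "length (es @ [e']) \<le> length es" using mx by blast
      then show False by simp
    qed
  qed
qed

lemma bpath_set_sub:
  assumes "bpath F vs es" "es \<noteq> []"
  shows "set vs \<subseteq> \<Union> F"
proof
  fix v assume "v \<in> set vs"
  then obtain i where i: "i < length vs" "vs ! i = v" by (auto simp: in_set_conv_nth)
  have L: "length vs = Suc (length es)" using assms(1) by (simp add: bpath_def)
  show "v \<in> \<Union> F"
  proof (cases "i < length es")
    case True
    then have "es ! i \<in> F" "vs ! i \<in> es ! i" using assms(1) by (auto simp: bpath_def)
    then show ?thesis using i by blast
  next
    case False
    then have j: "i - 1 < length es" "Suc (i - 1) = i" using i L assms(2) by (cases i; auto)+
    then have "es ! (i - 1) \<in> F" "vs ! Suc (i - 1) \<in> es ! (i - 1)" using assms(1) by (auto simp: bpath_def)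
    then show ?thesis using i j by auto
  qed
qed

lemma leaf_edge:
  assumes fF: "finite F" and ne: "F \<noteq> {}" and fin: "\<forall>e\<in>F. finite e \<and> 2 \<le> card e"
    and ac: "\<not> hg_has_cycle F"
  shows "\<exists>e\<in>F. \<exists>u\<in>e. \<forall>p\<in>e - {u}. \<forall>e'\<in>F. p \<in> e' \<longrightarrow> e' = e"
proof -
  define Q where "Q n \<longleftrightarrow> (\<exists>vs es. bpath F vs es \<and> es \<noteq> [] \<and> length es = n)" for n
  obtain e0 where e0: "e0 \<in> F" using ne by auto
  then have "finite e0" "2 \<le> card e0" using fin by auto
  then obtain a b where ab: "a \<in> e0" "b \<in> e0" "a \<noteq> b"
  proof -
    have "e0 \<noteq> {}" using \<open>2 \<le> card e0\<close> by auto
    then obtain a where a: "a \<in> e0" by auto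
    have "card (e0 - {a}) \<ge> 1" using \<open>finite e0\<close> \<open>2 \<le> card e0\<close> a by (simp add: card_Diff_singleton)
    then have "e0 - {a} \<noteq> {}" by (cases "e0 - {a} = {}") auto
    then obtain b where "b \<in> e0 - {a}" by auto
    then show ?thesis using that a by auto
  qed
  have "bpath F [a, b] [e0]" unfolding bpath_def using ab e0 by simp
  then have Q1: "Q 1" unfolding Q_def by force
  have fU: "finite (\<Union> F)" using fF fin by auto
  have bnd: "\<forall>n. Q n \<longrightarrow> n \<le> card (\<Union> F)"
  proof (intro allI impI)
    fix n assume "Q n"
    then obtain vs es where P: "bpath F vs es" "es \<noteq> []" "length es = n" by (auto simp: Q_def)
    have "length vs = card (set vs)" using P(1) by (simp add: bpath_def distinct_card)
    also have "\<dots> \<le> card (\<Union> F)" using bpath_set_sub[OF P(1,2)] fU by (simp add: card_mono)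
    finally show "n \<le> card (\<Union> F)" using P(1,3) by (simp add: bpath_def)
  qed
  obtain n where n: "Q n" "\<forall>y. Q y \<longrightarrow> y \<le> n" using Nat.ex_has_greatest_nat[OF Q1 bnd] by blast
  then obtain vs es where P: "bpath F vs es" "es \<noteq> []" "length es = n" by (auto simp: Q_def)
  have mx: "\<forall>vs' es'. bpath F vs' es' \<longrightarrow> length es' \<le> length es"
  proof (intro allI impI)
    fix vs' es' assume b: "bpath F vs' es'"
    show "length es' \<le> length es"
    proof (cases "es' = []")
      case True then show ?thesis by simp
    next
      case False then have "Q (length es')" using b by (auto simp: Q_def)
      then show ?thesis using n P(3) by auto
    qed
  qed
  define m where "m = length es"
  have m1: "m \<ge> 1" using P(2) by (cases es) (auto simp: m_def)
  have L: "length vs = Suc m" using P(1) by (simp add: bpath_def m_def)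
  have lv: "last vs = vs ! m" using L by (subst last_conv_nth) auto
  have le: "last es = es ! (m - 1)" using P(2) by (simp add: last_conv_nth m_def)
  have dist: "distinct es" "distinct vs" using P(1) by (auto simp: bpath_def)
  define e where "e = es ! (m - 1)"
  define u where "u = vs ! (m - 1)"
  have eF: "e \<in> F" using P(1) m1 by (auto simp: bpath_def e_def m_def)
  have ue0: "vs ! (m - 1) \<in> es ! (m - 1) \<and> vs ! Suc (m - 1) \<in> es ! (m - 1)"
    using P(1) m1 unfolding bpath_def m_def by auto
  have ue: "u \<in> e" "vs ! m \<in> e" using ue0 m1 by (auto simp: e_def u_def)
  show ?thesis
  proof (intro bexI[OF _ eF] bexI[OF _ ue(1)] ballI impI)
    fix p e' assume p: "p \<in> e - {u}" and e': "e' \<in> F" "p \<in> e'"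
    show "e' = e"
    proof (cases "p \<in> set vs")
      case True
      then obtain i where i: "i < Suc m" "vs ! i = p" using L by (auto simp: in_set_conv_nth)
      show ?thesis
      proof (cases "i = m")
        case True
        then show ?thesis using last_edge_unique[OF P(1,2) mx ac fin e'(1)] e'(2) i lv le e_def by simp
      next
        case False
        have im: "i \<noteq> m - 1" using i p u_def by auto
        with False i have im2: "i < m - 1" by simp
        have "hg_has_cycle F"
        proof (rule subpath_cycle[OF P(1), of i "m - 1" e])
          show "i < m - 1" by fact
          show "m - 1 \<le> length es" by (simp add: m_def)
          show "e \<in> F" by fact
          show "e \<notin> set (drop i (take (m - 1) es))"
          proof
            assume "e \<in> set (drop i (take (m - 1) es))"
            then have "e \<in> set (take (m - 1) es)" by (rule in_set_dropD)
            then obtain l where l: "l < m - 1" "es ! l = e" by (auto simp: in_set_conv_nth m_def)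
            then show False using dist(1) m1 e_def by (simp add: nth_eq_iff_index_eq m_def)
          qed
          show "vs ! i \<in> e" using i p by simp
          show "vs ! (m - 1) \<in> e" using ue u_def by simp
        qed
        then show ?thesis using ac by simp
      qed
    next
      case False
      have S: "bpath F (take m vs) (take (m - 1) es)"
      proof -
        have "Suc (m - 1) = m" using m1 by simp
        then show ?thesis using subpath(1)[OF P(1), of 0 "m - 1"] m1 by (simp add: m_def)
      qed
      have lt: "last (take m vs) = u" using take_Suc_conv_app_nth[of "m-1" vs] m1 L by (simp add: u_def)
      have "e \<notin> set (take (m - 1) es)"
      proof
        assume "e \<in> set (take (m - 1) es)"
        then obtain l where l: "l < m - 1" "es ! l = e" by (auto simp: in_set_conv_nth m_def)
        then show False using dist(1) m1 e_def by (simp add: nth_eq_iff_index_eq m_def)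
      qed
      then have B: "bpath F (take m vs @ [p]) (take (m - 1) es @ [e])"
        using path_snoc[OF S _ eF] False p lt ue by (auto dest: in_set_takeD)
      have esq: "take (m - 1) es @ [e] = es"
        using m1 P(2) by (metis e_def le append_butlast_last_id butlast_conv_take m_def)
      have B': "bpath F (take m vs @ [p]) es" using B esq by simp
      have "e' = last es"
        using last_edge_unique[OF B' P(2) mx ac fin e'(1)] e'(2) by simp
      then show ?thesis using le e_def by simp
    qed
  qed
qed



definition msets :: "'a set set \<Rightarrow> 'a set set set" where
  "msets F = {M. M \<subseteq> F \<and> pairwise disjnt M}"

definition Wf :: "complex \<Rightarrow> 'a set set \<Rightarrow> ('a \<Rightarrow> complex) \<Rightarrow> 'a set \<Rightarrow> complex" where
  "Wf t E s U = (\<Sum>M\<in>msets (induced_edges E U). (-t) ^ card M * (\<Prod>j\<in>U - \<Union>M. s j))"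

lemma IE_sub: "induced_edges E U \<subseteq> Pow U"
  by (auto simp: induced_edges_def)

lemma finite_IE: "finite U \<Longrightarrow> finite (induced_edges E U)"
  using IE_sub by (metis finite_Pow_iff finite_subset)

lemma finite_msets: "finite F \<Longrightarrow> finite (msets F)"
  unfolding msets_def by (rule finite_subset[of _ "Pow F"]) auto

lemma IE_mono: "A \<subseteq> B \<Longrightarrow> induced_edges E A \<subseteq> induced_edges E B"
  by (auto simp: induced_edges_def)

lemma Wf_cong: "(\<And>j. j \<in> U \<Longrightarrow> s j = s' j) \<Longrightarrow> Wf t E s U = Wf t E s' U"
  unfolding Wf_def by (intro sum.cong refl arg_cong2[where f="(*)"] prod.cong) auto

lemma vertex_split:
  assumes fU: "finite U" and u: "u \<in> U"
  shows "Wf t E s U = s u * Wf t E s (U - {u})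
           - t * (\<Sum>e\<in>{e\<in>induced_edges E U. u \<in> e}. Wf t E s (U - e))"
proof -
  define F where "F = induced_edges E U"
  define g where "g M = (-t) ^ card M * (\<Prod>j\<in>U - \<Union>M. s j)" for M :: "'a set set"
  define Fu where "Fu = {e\<in>F. u \<in> e}"
  define B where "B e = {M\<in>msets F. e \<in> M}" for e
  have fF: "finite F" using fU by (simp add: F_def finite_IE)
  have fms: "finite (msets F)" using fF by (rule finite_msets)
  have split: "msets F = {M\<in>msets F. u \<notin> \<Union>M} \<union> {M\<in>msets F. u \<in> \<Union>M}" by auto
  have "Wf t E s U = sum g {M\<in>msets F. u \<notin> \<Union>M} + sum g {M\<in>msets F. u \<in> \<Union>M}"
    unfolding Wf_def F_def[symmetric] g_def[symmetric]
    by (subst split, rule sum.union_disjoint) (use fms in auto)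
  moreover have A0: "{M\<in>msets F. u \<notin> \<Union>M} = msets (induced_edges E (U - {u}))"
    by (auto simp: msets_def F_def induced_edges_def)
  have "sum g {M\<in>msets F. u \<notin> \<Union>M} = s u * Wf t E s (U - {u})"
    unfolding A0 Wf_def sum_distrib_left
  proof (rule sum.cong[OF refl])
    fix M assume M: "M \<in> msets (induced_edges E (U - {u}))"
    then have "u \<notin> \<Union>M" by (auto simp: msets_def induced_edges_def)
    then have eq: "U - \<Union>M = insert u (U - {u} - \<Union>M)" using u by auto
    have "(\<Prod>j\<in>U - \<Union>M. s j) = s u * (\<Prod>j\<in>U - {u} - \<Union>M. s j)"
      unfolding eq using fU by (subst prod.insert) auto
    then show "g M = s u * ((- t) ^ card M * (\<Prod>j\<in>U - {u} - \<Union>M. s j))"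
      by (simp add: g_def)
  qed
  moreover have A1: "{M\<in>msets F. u \<in> \<Union>M} = (\<Union>e\<in>Fu. B e)"
    by (auto simp: B_def Fu_def msets_def)
  have "sum g (\<Union>e\<in>Fu. B e) = (\<Sum>e\<in>Fu. sum g (B e))"
  proof (rule sum.UNION_disjoint)
    show "finite Fu" using fF by (simp add: Fu_def)
    show "\<forall>e\<in>Fu. finite (B e)" using fms by (auto simp: B_def)
    show "\<forall>e\<in>Fu. \<forall>e'\<in>Fu. e \<noteq> e' \<longrightarrow> B e \<inter> B e' = {}"
    proof (intro ballI impI)
      fix e e' assume ee: "e \<in> Fu" "e' \<in> Fu" "e \<noteq> e'"
      show "B e \<inter> B e' = {}"
      proof (rule ccontr)
        assume "B e \<inter> B e' \<noteq> {}"
        then obtain M where "M \<in> msets F" "e \<in> M" "e' \<in> M" by (auto simp: B_def)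
        then have "disjnt e e'" using ee(3) by (auto simp: msets_def pairwise_def)
        then show False using ee by (auto simp: Fu_def disjnt_def)
      qed
    qed
  qed
  moreover have "sum g (B e) = - t * Wf t E s (U - e)" if e: "e \<in> Fu" for e
  proof -
    have eU: "e \<subseteq> U" "e \<in> E" "u \<in> e" using e by (auto simp: Fu_def F_def induced_edges_def)
    have bij: "bij_betw (insert e) (msets (induced_edges E (U - e))) (B e)"
    proof (rule bij_betwI[where g="\<lambda>M. M - {e}"])
      show "insert e \<in> msets (induced_edges E (U - e)) \<rightarrow> B e"
      proof
        fix M assume M: "M \<in> msets (induced_edges E (U - e))"
        have "pairwise disjnt (insert e M)"
        proof -
          have "\<forall>y\<in>M. y \<noteq> e \<longrightarrow> disjnt e y \<and> disjnt y e"
          proof (intro ballI impI)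
            fix y assume "y \<in> M" "y \<noteq> e"
            then have "y \<subseteq> U - e" using M by (auto simp: msets_def induced_edges_def)
            then show "disjnt e y \<and> disjnt y e" by (auto simp: disjnt_def)
          qed
          moreover have "pairwise disjnt M" using M by (simp add: msets_def)
          ultimately show ?thesis by (simp add: pairwise_insert)
        qed
        moreover have "insert e M \<subseteq> F"
          using M e by (auto simp: msets_def induced_edges_def F_def Fu_def)
        ultimately show "insert e M \<in> B e" by (simp add: B_def msets_def)
      qed
      show "(\<lambda>M. M - {e}) \<in> B e \<rightarrow> msets (induced_edges E (U - e))"
      proof
        fix M assume M: "M \<in> B e"
        then have M': "M \<subseteq> F" "pairwise disjnt M" "e \<in> M" by (auto simp: B_def msets_def)
        have "M - {e} \<subseteq> induced_edges E (U - e)"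
        proof
          fix y assume y: "y \<in> M - {e}"
          then have "disjnt e y" using M' by (auto simp: pairwise_def)
          then show "y \<in> induced_edges E (U - e)"
            using y M' by (auto simp: F_def induced_edges_def disjnt_def)
        qed
        then show "M - {e} \<in> msets (induced_edges E (U - e))"
          using M' by (auto simp: msets_def pairwise_def)
      qed
      fix M assume "M \<in> msets (induced_edges E (U - e))"
      then have "e \<notin> M" using eU by (auto simp: msets_def induced_edges_def)
      then show "insert e M - {e} = M" by simp
    next
      fix M assume "M \<in> B e"
      then show "insert e (M - {e}) = M" by (auto simp: B_def)
    qed
    have "sum g (B e) = (\<Sum>M\<in>msets (induced_edges E (U - e)). g (insert e M))"
      using sum.reindex_bij_betw[OF bij, of g] by simp
    also have "\<dots> = (\<Sum>M\<in>msets (induced_edges E (U - e)). - t * ((-t) ^ card M * (\<Prod>j\<in>U - e - \<Union>M. s j)))"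
    proof (rule sum.cong[OF refl])
      fix M assume M: "M \<in> msets (induced_edges E (U - e))"
      then have eM: "e \<notin> M" using eU by (auto simp: msets_def induced_edges_def)
      have fM: "finite M" using M finite_IE[of "U - e" E] fU
        by (auto simp: msets_def intro: finite_subset)
      have "card (insert e M) = Suc (card M)" using eM fM by simp
      moreover have "U - \<Union>(insert e M) = U - e - \<Union>M" by auto
      ultimately show "g (insert e M) = - t * ((-t) ^ card M * (\<Prod>j\<in>U - e - \<Union>M. s j))"
        by (simp add: g_def)
    qed
    also have "\<dots> = - t * Wf t E s (U - e)" by (simp add: Wf_def sum_distrib_left)
    finally show ?thesis .
  qed
  ultimately show ?thesis
    using A1 by (simp add: Fu_def F_def sum_distrib_left sum_negf)
qed



lemma isolated_removal:
  assumes fA: "finite A" and fQ: "finite Q"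
  shows "Q \<subseteq> A \<Longrightarrow> (\<forall>q\<in>Q. \<forall>e\<in>induced_edges E A. q \<notin> e) \<Longrightarrow>
    Wf t E s A = (\<Prod>q\<in>Q. s q) * Wf t E s (A - Q)"
  using fQ
proof (induction Q rule: finite_induct)
  case empty then show ?case by simp
next
  case (insert q Q)
  have p1: "Q \<subseteq> A" "q \<in> A" using insert.prems(1) by auto
  have p2: "\<forall>q\<in>Q. \<forall>e\<in>induced_edges E A. q \<notin> e" "\<forall>e\<in>induced_edges E A. q \<notin> e"
    using insert.prems(2) by auto
  have IH: "Wf t E s A = (\<Prod>q\<in>Q. s q) * Wf t E s (A - Q)" using insert.IH[OF p1(1) p2(1)] .
  have qA: "q \<in> A - Q" using p1 insert(2) by auto
  have em: "{e\<in>induced_edges E (A - Q). q \<in> e} = {}"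
    using p2(2) IE_mono[of "A - Q" A E] by auto
  have "Wf t E s (A - Q) = s q * Wf t E s (A - Q - {q})"
    using vertex_split[OF _ qA, of t E s] fA unfolding em by simp
  moreover have "A - Q - {q} = A - insert q Q" by auto
  ultimately show ?case using IH insert(1,2) by (simp add: mult.assoc)
qed

lemma leaf_identity:
  assumes fU: "finite U" and e: "e \<in> induced_edges E U" and u: "u \<in> e" and Pne: "e - {u} \<noteq> {}"
    and pend: "\<forall>p\<in>e - {u}. \<forall>e'\<in>induced_edges E U. p \<in> e' \<longrightarrow> e' = e"
  shows "Wf t E s U = (\<Prod>p\<in>e - {u}. s p) * Wf t E s (U - (e - {u})) - t * Wf t E s (U - (e - {u}) - {u})"
proof -
  define P where "P = e - {u}"
  obtain p0 where p0: "p0 \<in> P" using Pne by (auto simp: P_def)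
  have eU: "e \<subseteq> U" "e \<in> E" using e by (auto simp: induced_edges_def)
  have fe: "finite e" using eU fU by (auto intro: finite_subset)
  have fP: "finite P" using fe by (simp add: P_def)
  have p0U: "p0 \<in> U" using p0 eU by (auto simp: P_def)
  have star: "{e'\<in>induced_edges E U. p0 \<in> e'} = {e}" using pend p0 e by (auto simp: P_def)
  have S1: "Wf t E s U = s p0 * Wf t E s (U - {p0}) - t * Wf t E s (U - e)"
    using vertex_split[OF fU p0U, of t E s] star by simp
  have iso: "\<forall>q\<in>P - {p0}. \<forall>e'\<in>induced_edges E (U - {p0}). q \<notin> e'"
  proof (intro ballI notI)
    fix q e' assume q: "q \<in> P - {p0}" and e': "e' \<in> induced_edges E (U - {p0})" "q \<in> e'"
    then have "e' \<in> induced_edges E U" using IE_mono[of "U - {p0}" U E] by auto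
    then have "e' = e" using pend q e' by (auto simp: P_def)
    then show False using e' p0 by (auto simp: induced_edges_def P_def)
  qed
  have "Wf t E s (U - {p0}) = (\<Prod>q\<in>P - {p0}. s q) * Wf t E s (U - {p0} - (P - {p0}))"
  proof (rule isolated_removal)
    show "finite (U - {p0})" using fU by simp
    show "finite (P - {p0})" using fP by simp
    show "P - {p0} \<subseteq> U - {p0}" using eU by (auto simp: P_def)
    show "\<forall>q\<in>P - {p0}. \<forall>e\<in>induced_edges E (U - {p0}). q \<notin> e" by (rule iso)
  qed
  moreover have "U - {p0} - (P - {p0}) = U - P" using p0 by auto
  moreover have "(\<Prod>p\<in>P. s p) = s p0 * (\<Prod>q\<in>P - {p0}. s q)" using fP p0 by (simp add: prod.remove)
  moreover have "U - e = U - P - {u}" using u by (auto simp: P_def)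
  ultimately show ?thesis using S1 by (simp add: P_def mult.assoc)
qed

lemma Wf_update:
  assumes fA: "finite A" and u: "u \<in> A"
  shows "Wf t E (s(u := a)) A = Wf t E s A + (a - s u) * Wf t E s (A - {u})"
proof -
  have c1: "Wf t E (s(u := a)) (A - {u}) = Wf t E s (A - {u})" by (rule Wf_cong) auto
  have c2: "Wf t E (s(u := a)) (A - e) = Wf t E s (A - e)" if "u \<in> e" for e
    by (rule Wf_cong) (use that in auto)
  have "(\<Sum>e\<in>{e\<in>induced_edges E A. u \<in> e}. Wf t E (s(u := a)) (A - e))
      = (\<Sum>e\<in>{e\<in>induced_edges E A. u \<in> e}. Wf t E s (A - e))"
    by (rule sum.cong) (auto simp: c2)
  note h1 = vertex_split[OF fA u, of t E "s(u := a)", unfolded fun_upd_same c1 this]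
  show ?thesis unfolding h1 vertex_split[OF fA u, of t E s] by (simp add: algebra_simps)
qed

lemma hg_has_cycle_mono: "F \<subseteq> E \<Longrightarrow> hg_has_cycle F \<Longrightarrow> hg_has_cycle E"
  unfolding hg_has_cycle_def by blast

lemma msets_empty: "msets {} = {{}}"
  by (auto simp: msets_def)

lemma Wf_noedges: "induced_edges E U = {} \<Longrightarrow> Wf t E s U = (\<Prod>j\<in>U. s j)"
  by (simp add: Wf_def msets_empty)



lemma onlyif_lemma:
  assumes ac: "\<not> hg_has_cycle E" and unif: "\<forall>e\<in>E. finite e \<and> card e = k" and k2: "k \<ge> 2"
    and lam: "lam \<noteq> 0"
  shows "finite U \<Longrightarrow> U \<noteq> {} \<Longrightarrow> (\<forall>j\<in>U. x j \<noteq> 0) \<Longrightarrow>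
    (\<forall>j\<in>U. lam * s j * x j ^ k = (\<Sum>e\<in>{e\<in>induced_edges E U. j \<in> e}. \<Prod>i\<in>e. x i)) \<Longrightarrow>
    Wf (1 / lam ^ k) E s U = 0"
proof (induction "card U" arbitrary: U s rule: less_induct)
  case less
  note fU = less.prems(1) and Une = less.prems(2) and xnz = less.prems(3) and eq = less.prems(4)
  define t where "t = 1 / lam ^ k"
  show ?case
  proof (cases "induced_edges E U = {}")
    case True
    have "\<forall>j\<in>U. s j = 0"
    proof
      fix j assume j: "j \<in> U"
      then have "lam * s j * x j ^ k = 0" using eq[rule_format, OF j] True by simp
      then show "s j = 0" using lam xnz j by simp
    qed
    then show ?thesis using Wf_noedges[OF True] fU Une by auto
  next
    case False
    have fF: "finite (induced_edges E U)" using fU by (rule finite_IE)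
    have finF: "\<forall>e\<in>induced_edges E U. finite e \<and> 2 \<le> card e"
      using unif k2 by (auto simp: induced_edges_def)
    have acF: "\<not> hg_has_cycle (induced_edges E U)"
      using ac hg_has_cycle_mono[of "induced_edges E U" E] by (auto simp: induced_edges_def)
    obtain e u where e: "e \<in> induced_edges E U" and u: "u \<in> e"
      and pend: "\<forall>p\<in>e - {u}. \<forall>e'\<in>induced_edges E U. p \<in> e' \<longrightarrow> e' = e"
      using leaf_edge[OF fF False finF acF] by blast
    define P where "P = e - {u}"
    define U' where "U' = U - P"
    have eU: "e \<subseteq> U" "e \<in> E" using e by (auto simp: induced_edges_def)
    have fe: "finite e" "card e = k" using unif eU by auto
    have fP: "finite P" using fe by (simp add: P_def)
    have cP: "card P = k - 1" using fe u by (simp add: P_def)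
    have Pne: "P \<noteq> {}" using cP k2 by auto
    have PU: "P \<subseteq> U" using eU by (auto simp: P_def)
    have cU': "card U' < card U" unfolding U'_def using PU Pne fU
      by (intro psubset_card_mono) auto
    have uU': "u \<in> U'" using u eU by (auto simp: U'_def P_def)
    have fU': "finite U'" using fU by (simp add: U'_def)
    have IE': "induced_edges E U' = induced_edges E U - {e}"
    proof
      show "induced_edges E U' \<subseteq> induced_edges E U - {e}"
      proof
        fix e' assume e': "e' \<in> induced_edges E U'"
        then have "e' \<in> induced_edges E U" using IE_mono[of U' U E] by (auto simp: U'_def)
        moreover have "e' \<noteq> e" using e' Pne by (auto simp: induced_edges_def U'_def P_def)
        ultimately show "e' \<in> induced_edges E U - {e}" by simp
      qed
      show "induced_edges E U - {e} \<subseteq> induced_edges E U'"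
      proof
        fix e' assume e': "e' \<in> induced_edges E U - {e}"
        then have "e' \<inter> P = {}" using pend by (auto simp: P_def)
        then show "e' \<in> induced_edges E U'" using e' by (auto simp: induced_edges_def U'_def)
      qed
    qed
    define pe where "pe = (\<Prod>i\<in>e. x i)"
    have pe_nz: "pe \<noteq> 0" using xnz eU fe by (auto simp: pe_def)
    have xu: "x u \<noteq> 0" using xnz u eU by auto
    define c where "c = pe / (lam * x u ^ k)"
    define s' where "s' = s(u := s u - c)"
    have eq': "\<forall>j\<in>U'. lam * s' j * x j ^ k = (\<Sum>e\<in>{e\<in>induced_edges E U'. j \<in> e}. \<Prod>i\<in>e. x i)"
    proof
      fix j assume j: "j \<in> U'"
      then have jU: "j \<in> U" by (simp add: U'_def)
      show "lam * s' j * x j ^ k = (\<Sum>e\<in>{e\<in>induced_edges E U'. j \<in> e}. \<Prod>i\<in>e. x i)"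
      proof (cases "j = u")
        case True
        have setq: "{e'\<in>induced_edges E U'. u \<in> e'} = {e'\<in>induced_edges E U. u \<in> e'} - {e}"
          unfolding IE' by auto
        have fin: "finite {e'\<in>induced_edges E U. u \<in> e'}" using fF by simp
        have "(\<Sum>e'\<in>{e'\<in>induced_edges E U. u \<in> e'}. \<Prod>i\<in>e'. x i)
              = pe + (\<Sum>e'\<in>{e'\<in>induced_edges E U. u \<in> e'} - {e}. \<Prod>i\<in>e'. x i)"
          using sum.remove[OF fin, of e] e u by (simp add: pe_def)
        then have "(\<Sum>e'\<in>{e'\<in>induced_edges E U'. u \<in> e'}. \<Prod>i\<in>e'. x i) = lam * s u * x u ^ k - pe"
          using eq jU True unfolding setq by simp
        moreover have "lam * s' u * x u ^ k = lam * s u * x u ^ k - pe"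
          using lam xu by (simp add: s'_def c_def field_simps)
        ultimately show ?thesis using True by simp
      next
        case False
        have "j \<notin> e" using j False by (auto simp: U'_def P_def)
        then have setq: "{e'\<in>induced_edges E U'. j \<in> e'} = {e'\<in>induced_edges E U. j \<in> e'}"
          unfolding IE' by auto
        show ?thesis using eq jU False unfolding setq by (simp add: s'_def)
      qed
    qed
    have IH: "Wf (1 / lam ^ k) E s' U' = 0"
      using less.hyps[OF cU' fU' _ _ eq'] uU' xnz by (auto simp: U'_def)
    have sp: "s p = pe / (lam * x p ^ k)" if p: "p \<in> P" for p
    proof -
      have st: "{e'\<in>induced_edges E U. p \<in> e'} = {e}" using pend p e by (auto simp: P_def)
      have pU: "p \<in> U" using p PU by auto
      have "lam * s p * x p ^ k = pe" using eq[rule_format, OF pU] unfolding st by (simp add: pe_def)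
      moreover have "x p \<noteq> 0" using xnz p PU by auto
      ultimately show ?thesis using lam by (simp add: field_simps)
    qed
    define X where "X = (\<Prod>p\<in>P. x p)"
    have peX: "pe = x u * X" unfolding pe_def X_def P_def using fe u by (simp add: prod.remove)
    have prodP: "(\<Prod>p\<in>P. s p) = pe ^ (k - 1) / (lam ^ (k - 1) * X ^ k)"
    proof -
      have "(\<Prod>p\<in>P. s p) = (\<Prod>p\<in>P. pe / (lam * x p ^ k))" using sp by (rule prod.cong[OF refl])
      also have "\<dots> = pe ^ (k - 1) / (lam ^ (k - 1) * X ^ k)"
        by (simp add: prod_dividef prod.distrib cP X_def prod_power_distrib)
      finally show ?thesis .
    qed
    have key: "(\<Prod>p\<in>P. s p) * c = t"
    proof -
      obtain k1 where k1: "k = Suc k1" using k2 by (cases k) auto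
      have Xnz: "X \<noteq> 0" using pe_nz peX by auto
      have "(\<Prod>p\<in>P. s p) * c = pe ^ k1 * pe / (lam ^ k1 * lam * ((X * x u) ^ Suc k1))"
        unfolding prodP c_def k1 by (simp add: power_mult_distrib field_simps)
      also have "\<dots> = pe ^ Suc k1 / (lam ^ Suc k1 * pe ^ Suc k1)" using peX by (simp add: mult.commute)
      also have "\<dots> = t" using pe_nz lam by (simp add: t_def k1)
      finally show ?thesis .
    qed
    have L: "Wf t E s U = (\<Prod>p\<in>P. s p) * Wf t E s U' - t * Wf t E s (U' - {u})"
      using leaf_identity[OF fU e u _ pend, of t s] Pne by (simp add: P_def U'_def)
    have Up: "Wf t E s' U' = Wf t E s U' - c * Wf t E s (U' - {u})"
      using Wf_update[OF fU' uU', of t E s "s u - c"] by (simp add: s'_def algebra_simps)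
    have "Wf t E s U = (\<Prod>p\<in>P. s p) * Wf t E s' U' + ((\<Prod>p\<in>P. s p) * c - t) * Wf t E s (U' - {u})"
      unfolding L Up by (simp add: algebra_simps)
    also have "\<dots> = 0" using IH key by (simp add: t_def)
    finally show ?thesis by (simp add: t_def)
  qed
qed



lemma ex_croot: fixes c :: complex assumes "c \<noteq> 0" "n > 0" shows "\<exists>z. z ^ n = c"
proof -
  have "root n (norm c) * cis (Arg c / n) * 1 \<in> {z. z ^ n = c}"
    using bij_betw_apply[OF bij_betw_nth_root_unity[OF assms], of 1] by simp
  then show ?thesis by blast
qed

definition rt :: "nat \<Rightarrow> complex \<Rightarrow> complex" where "rt n c = (SOME z. z ^ n = c)"

lemma rt_pow: "c \<noteq> 0 \<Longrightarrow> n > 0 \<Longrightarrow> rt n c ^ n = c"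
  unfolding rt_def by (rule someI_ex, rule ex_croot)

lemma rt_nz: "c \<noteq> 0 \<Longrightarrow> n > 0 \<Longrightarrow> rt n c \<noteq> 0"
  using rt_pow[of c n] by (cases "rt n c = 0") auto

lemma single_witness:
  fixes lam :: complex and s :: "'a \<Rightarrow> complex" and E :: "'a set set"
  assumes unif: "\<forall>e\<in>E. finite e \<and> card e = k" and k2: "k \<ge> 2"
    and j: "j \<in> U" "s j = 0"
  shows "\<exists>U1. U1 \<subseteq> U \<and> U1 \<noteq> {} \<and>
    (\<exists>x. (\<forall>j\<in>U1. x j \<noteq> 0) \<and> (\<forall>j\<in>U1. lam * s j * x j ^ k = (\<Sum>e\<in>{e\<in>induced_edges E U1. j \<in> e}. \<Prod>i\<in>e. x i))) \<and>
    (\<forall>e\<in>induced_edges E U. \<not> e \<subseteq> U1 \<longrightarrow> card (e \<inter> U1) \<le> 1)"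
proof (rule exI[of _ "{j}"], intro conjI)
  show "{j} \<subseteq> U" "{j} \<noteq> {}" using j by auto
  have IE: "induced_edges E {j} = {}"
  proof (rule ccontr)
    assume "induced_edges E {j} \<noteq> {}"
    then obtain e where "e \<in> E" "e \<subseteq> {j}" by (auto simp: induced_edges_def)
    then have "card e \<le> 1" using card_mono[of "{j}" e] by simp
    then show False using unif k2 \<open>e \<in> E\<close> by auto
  qed
  show "\<exists>x. (\<forall>i\<in>{j}. x i \<noteq> 0) \<and> (\<forall>i\<in>{j}. lam * s i * x i ^ k = (\<Sum>e\<in>{e\<in>induced_edges E {j}. i \<in> e}. \<Prod>i\<in>e. x i))"
    by (rule exI[of _ "\<lambda>_. 1"]) (simp add: IE j)
  show "\<forall>e\<in>induced_edges E U. \<not> e \<subseteq> {j} \<longrightarrow> card (e \<inter> {j}) \<le> 1"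
    using card_mono[of "{j}"] by (auto simp: Int_commute)
qed


lemma if_lemma:
  fixes lam :: complex and E :: "'a set set"
  assumes ac: "\<not> hg_has_cycle E" and unif: "\<forall>e\<in>E. finite e \<and> card e = k" and k2: "k \<ge> 2"
    and lam: "lam \<noteq> 0"
  shows "finite U \<Longrightarrow> Wf (1 / lam ^ k) E s U = 0 \<Longrightarrow>
    \<exists>U1. U1 \<subseteq> U \<and> U1 \<noteq> {} \<and>
    (\<exists>x. (\<forall>j\<in>U1. x j \<noteq> 0) \<and> (\<forall>j\<in>U1. lam * s j * x j ^ k = (\<Sum>e\<in>{e\<in>induced_edges E U1. j \<in> e}. \<Prod>i\<in>e. x i))) \<and>
    (\<forall>e\<in>induced_edges E U. \<not> e \<subseteq> U1 \<longrightarrow> card (e \<inter> U1) \<le> 1)"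
proof (induction "card U" arbitrary: U s rule: less_induct)
  case less
  note fU = less.prems(1) and W0 = less.prems(2)
  define t where "t = 1 / lam ^ k"
  have tnz: "t \<noteq> 0" using lam by (simp add: t_def)
  show ?case
  proof (cases "induced_edges E U = {}")
    case True
    have "(\<Prod>j\<in>U. s j) = 0" using W0 Wf_noedges[OF True] by simp
    then obtain j where "j \<in> U" "s j = 0" using fU by auto
    then show ?thesis by (rule single_witness[OF unif k2])
  next
    case False
    have fF: "finite (induced_edges E U)" using fU by (rule finite_IE)
    have finF: "\<forall>e\<in>induced_edges E U. finite e \<and> 2 \<le> card e"
      using unif k2 by (auto simp: induced_edges_def)
    have acF: "\<not> hg_has_cycle (induced_edges E U)"
      using ac hg_has_cycle_mono[of "induced_edges E U" E] by (auto simp: induced_edges_def)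
    obtain e u where e: "e \<in> induced_edges E U" and u: "u \<in> e"
      and pend: "\<forall>p\<in>e - {u}. \<forall>e'\<in>induced_edges E U. p \<in> e' \<longrightarrow> e' = e"
      using leaf_edge[OF fF False finF acF] by blast
    define P where "P = e - {u}"
    define U' where "U' = U - P"
    have eU: "e \<subseteq> U" "e \<in> E" using e by (auto simp: induced_edges_def)
    have fe: "finite e" "card e = k" using unif eU by auto
    have fP: "finite P" using fe by (simp add: P_def)
    have cP: "card P = k - 1" using fe u by (simp add: P_def)
    have Pne: "P \<noteq> {}" using cP k2 by auto
    have PU: "P \<subseteq> U" using eU by (auto simp: P_def)
    have cU': "card U' < card U" unfolding U'_def using PU Pne fU
      by (intro psubset_card_mono) auto
    have uU': "u \<in> U'" using u eU by (auto simp: U'_def P_def)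
    have fU': "finite U'" using fU by (simp add: U'_def)
    have eq_e: "e = insert u P" using u by (auto simp: P_def)
    have uP: "u \<notin> P" by (simp add: P_def)
    have IE': "induced_edges E U' = induced_edges E U - {e}"
    proof
      show "induced_edges E U' \<subseteq> induced_edges E U - {e}"
      proof
        fix e' assume e': "e' \<in> induced_edges E U'"
        then have "e' \<in> induced_edges E U" using IE_mono[of U' U E] by (auto simp: U'_def)
        moreover have "e' \<noteq> e" using e' Pne by (auto simp: induced_edges_def U'_def P_def)
        ultimately show "e' \<in> induced_edges E U - {e}" by simp
      qed
      show "induced_edges E U - {e} \<subseteq> induced_edges E U'"
      proof
        fix e' assume e': "e' \<in> induced_edges E U - {e}"
        then have "e' \<inter> P = {}" using pend by (auto simp: P_def)
        then show "e' \<in> induced_edges E U'" using e' by (auto simp: induced_edges_def U'_def)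
      qed
    qed
    have other: "e' \<inter> P = {}" if "e' \<in> induced_edges E U" "e' \<noteq> e" for e'
      using pend that by (auto simp: P_def)
    show ?thesis
    proof (cases "\<exists>p\<in>P. s p = 0")
      case True
      then obtain p where "p \<in> U" "s p = 0" using PU by auto
      then show ?thesis by (rule single_witness[OF unif k2])
    next
      case False
      then have snz: "\<forall>p\<in>P. s p \<noteq> 0" by auto
      define SP where "SP = (\<Prod>p\<in>P. s p)"
      have SPnz: "SP \<noteq> 0" using snz fP by (simp add: SP_def)
      define c where "c = t / SP"
      have cnz: "c \<noteq> 0" using tnz SPnz by (simp add: c_def)
      define s' where "s' = s(u := s u - c)"
      have L: "Wf t E s U = SP * Wf t E s U' - t * Wf t E s (U' - {u})"
        using leaf_identity[OF fU e u _ pend, of t s] Pne by (simp add: P_def U'_def SP_def)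
      have Up: "Wf t E s' U' = Wf t E s U' - c * Wf t E s (U' - {u})"
        using Wf_update[OF fU' uU', of t E s "s u - c"] by (simp add: s'_def algebra_simps)
      have "SP * Wf t E s' U' = Wf t E s U"
        unfolding L Up using SPnz by (simp add: c_def algebra_simps)
      then have W': "Wf (1 / lam ^ k) E s' U' = 0" using W0 SPnz by (simp add: t_def)
      obtain U1 x' where U1: "U1 \<subseteq> U'" "U1 \<noteq> {}" and x'nz: "\<forall>j\<in>U1. x' j \<noteq> 0"
        and x'eq: "\<forall>j\<in>U1. lam * s' j * x' j ^ k = (\<Sum>e\<in>{e\<in>induced_edges E U1. j \<in> e}. \<Prod>i\<in>e. x' i)"
        and cond: "\<forall>e\<in>induced_edges E U'. \<not> e \<subseteq> U1 \<longrightarrow> card (e \<inter> U1) \<le> 1"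
        using less.hyps[OF cU' fU' W'] by blast
      have U1U: "U1 \<subseteq> U" using U1 by (auto simp: U'_def)
      have U1P: "U1 \<inter> P = {}" using U1 by (auto simp: U'_def)
      show ?thesis
      proof (cases "u \<in> U1")
        case False
        show ?thesis
        proof (rule exI[of _ U1], intro conjI)
          show "U1 \<subseteq> U" "U1 \<noteq> {}" using U1U U1 by auto
          show "\<exists>x. (\<forall>j\<in>U1. x j \<noteq> 0) \<and> (\<forall>j\<in>U1. lam * s j * x j ^ k = (\<Sum>e\<in>{e\<in>induced_edges E U1. j \<in> e}. \<Prod>i\<in>e. x i))"
          proof (rule exI[of _ x'], intro conjI ballI)
            fix j assume j: "j \<in> U1"
            show "x' j \<noteq> 0" using x'nz j by auto
            have "s' j = s j" using j False by (auto simp: s'_def)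
            then show "lam * s j * x' j ^ k = (\<Sum>e\<in>{e\<in>induced_edges E U1. j \<in> e}. \<Prod>i\<in>e. x' i)"
              using x'eq j by auto
          qed
          show "\<forall>e'\<in>induced_edges E U. \<not> e' \<subseteq> U1 \<longrightarrow> card (e' \<inter> U1) \<le> 1"
          proof (intro ballI impI)
            fix e' assume e': "e' \<in> induced_edges E U" "\<not> e' \<subseteq> U1"
            show "card (e' \<inter> U1) \<le> 1"
            proof (cases "e' = e")
              case True
              then have "e' \<inter> U1 = {}" using False U1P eq_e by auto
              then show ?thesis by simp
            next
              case ne: False
              then have "e' \<in> induced_edges E U'" using IE' e' by auto
              then show ?thesis using cond e' by auto
            qed
          qed
        qed
      next
        case True
        define pe where "pe = lam * c * x' u ^ k"
        have xu: "x' u \<noteq> 0" using x'nz True by auto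
        have pe_nz: "pe \<noteq> 0" using lam cnz xu by (simp add: pe_def)
        obtain q where q: "q \<in> P" using Pne by auto
        define P' where "P' = P - {q}"
        have fP': "finite P'" using fP by (simp add: P'_def)
        have cP': "card P' = k - 2" using cP q fP by (simp add: P'_def)
        have kpos: "k > 0" using k2 by simp
        define y0 where "y0 p = rt k (pe / (lam * s p))" for p
        have y0pow: "y0 p ^ k = pe / (lam * s p)" if "p \<in> P" for p
          using rt_pow[OF _ kpos] pe_nz lam snz that by (simp add: y0_def)
        have y0nz: "y0 p \<noteq> 0" if "p \<in> P" for p
          using rt_nz[OF _ kpos] pe_nz lam snz that by (simp add: y0_def)
        define Y' where "Y' = (\<Prod>p\<in>P'. y0 p)"
        have Y'nz: "Y' \<noteq> 0" using y0nz fP' by (auto simp: Y'_def P'_def)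
        define yq where "yq = pe / (x' u * Y')"
        define x where "x i = (if i = q then yq else if i \<in> P then y0 i else x' i)" for i
        have x_U1: "x i = x' i" if "i \<in> U1" for i using that U1P q by (auto simp: x_def)
        have x_P': "x i = y0 i" if "i \<in> P'" for i using that by (auto simp: x_def P'_def)
        have yqnz: "yq \<noteq> 0" using pe_nz xu Y'nz by (simp add: yq_def)
        have prod_e: "(\<Prod>i\<in>e. x i) = pe"
        proof -
          have "(\<Prod>i\<in>e. x i) = x u * (\<Prod>i\<in>P. x i)"
            using eq_e uP fP by simp
          also have "(\<Prod>i\<in>P. x i) = x q * (\<Prod>i\<in>P'. x i)"
            using fP q by (simp add: P'_def prod.remove)
          also have "(\<Prod>i\<in>P'. x i) = Y'" unfolding Y'_def using x_P' by (rule prod.cong[OF refl])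
          also have "x u = x' u" using uP q by (auto simp: x_def)
          also have "x q = yq" by (simp add: x_def)
          finally show ?thesis using xu Y'nz by (simp add: yq_def)
        qed
        define U2 where "U2 = U1 \<union> P"
        have U2U: "U2 \<subseteq> U" using U1U PU by (auto simp: U2_def)
        have eU2: "e \<subseteq> U2" using eq_e True by (auto simp: U2_def)
        have eN: "e \<notin> induced_edges E U1" using Pne U1P eq_e by (auto simp: induced_edges_def)
        have IE2: "induced_edges E U2 = insert e (induced_edges E U1)"
        proof
          show "induced_edges E U2 \<subseteq> insert e (induced_edges E U1)"
          proof
            fix e' assume e': "e' \<in> induced_edges E U2"
            show "e' \<in> insert e (induced_edges E U1)"
            proof (cases "e' = e")
              case False
              have "e' \<in> induced_edges E U" using e' U2U IE_mono[of U2 U E] by auto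
              then have "e' \<inter> P = {}" using other False by auto
              then show ?thesis using e' by (auto simp: induced_edges_def U2_def)
            qed simp
          qed
          show "insert e (induced_edges E U1) \<subseteq> induced_edges E U2"
            using eU2 eU IE_mono[of U1 U2 E] by (auto simp: induced_edges_def U2_def)
        qed
        have IE1U: "induced_edges E U1 \<subseteq> induced_edges E U" using IE_mono[OF U1U] .
        have sum_U1: "(\<Sum>e'\<in>{e'\<in>induced_edges E U1. j \<in> e'}. \<Prod>i\<in>e'. x i)
            = (\<Sum>e'\<in>{e'\<in>induced_edges E U1. j \<in> e'}. \<Prod>i\<in>e'. x' i)" for j
        proof (rule sum.cong[OF refl])
          fix e' assume "e' \<in> {e'\<in>induced_edges E U1. j \<in> e'}"
          then have "e' \<subseteq> U1" by (auto simp: induced_edges_def)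
          then show "(\<Prod>i\<in>e'. x i) = (\<Prod>i\<in>e'. x' i)" using x_U1 by (auto intro: prod.cong)
        qed
        have fIE1: "finite (induced_edges E U1)" using finite_IE fU U1U finite_subset by blast
        show ?thesis
        proof (rule exI[of _ U2], intro conjI)
          show "U2 \<subseteq> U" by fact
          show "U2 \<noteq> {}" using Pne by (simp add: U2_def)
          show "\<exists>x. (\<forall>j\<in>U2. x j \<noteq> 0) \<and> (\<forall>j\<in>U2. lam * s j * x j ^ k = (\<Sum>e\<in>{e\<in>induced_edges E U2. j \<in> e}. \<Prod>i\<in>e. x i))"
          proof (rule exI[of _ x], intro conjI ballI)
            fix j assume j: "j \<in> U2"
            show "x j \<noteq> 0"
            proof (cases "j \<in> U1")
              case True then show ?thesis using x_U1 x'nz by auto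
            next
              case False
              then have "j \<in> P" using j by (simp add: U2_def)
              then show ?thesis using yqnz y0nz by (auto simp: x_def)
            qed
            show "lam * s j * x j ^ k = (\<Sum>e\<in>{e\<in>induced_edges E U2. j \<in> e}. \<Prod>i\<in>e. x i)"
            proof (cases "j \<in> P")
              case jP: True
              have st: "{e'\<in>induced_edges E U2. j \<in> e'} = {e}"
                using IE2 jP eq_e IE1U other by auto
              have "lam * s j * x j ^ k = pe"
              proof (cases "j = q")
                case False
                then have "x j = y0 j" using jP by (simp add: x_def)
                then show ?thesis using y0pow[OF jP] lam snz jP by (simp add: field_simps)
              next
                case True
                obtain k2' where k2': "k = Suc (Suc k2')" using k2 by (metis add_2_eq_Suc le_Suc_ex)
                have SPq: "SP = s q * (\<Prod>p\<in>P'. s p)" using fP q by (simp add: SP_def P'_def prod.remove)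
                have Ypow: "Y' ^ k = pe ^ k2' / (lam ^ k2' * (\<Prod>p\<in>P'. s p))"
                proof -
                  have "Y' ^ k = (\<Prod>p\<in>P'. y0 p ^ k)"
                    unfolding Y'_def by (simp add: prod_power_distrib)
                  also have "\<dots> = (\<Prod>p\<in>P'. pe / (lam * s p))"
                    by (rule prod.cong[OF refl]) (use y0pow in \<open>auto simp: P'_def\<close>)
                  also have "\<dots> = pe ^ k2' / (lam ^ k2' * (\<Prod>p\<in>P'. s p))"
                    by (simp add: prod_dividef prod.distrib cP' k2')
                  finally show ?thesis .
                qed
                have cc: "c * (s q * (\<Prod>p\<in>P'. s p)) * lam ^ k = 1"
                  using SPnz lam by (simp add: c_def t_def SPq[symmetric])
                have "lam * s j * x j ^ k = lam * s q * (pe ^ k / (x' u ^ k * Y' ^ k))"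
                  using True by (simp add: x_def yq_def power_divide power_mult_distrib)
                also have "\<dots> = lam * s q * (pe ^ k * (lam ^ k2' * (\<Prod>p\<in>P'. s p)) / (x' u ^ k * pe ^ k2'))"
                  unfolding Ypow using pe_nz lam SPnz SPq by (simp add: field_simps)
                also have "\<dots> = lam ^ Suc k2' * s q * (\<Prod>p\<in>P'. s p) * pe * (pe / x' u ^ k)"
                  using pe_nz xu by (simp add: k2' field_simps)
                also have "pe / x' u ^ k = lam * c" using xu by (simp add: pe_def)
                also have "lam ^ Suc k2' * s q * (\<Prod>p\<in>P'. s p) * pe * (lam * c) = pe * (c * (s q * (\<Prod>p\<in>P'. s p)) * lam ^ k)"
                  by (simp add: k2' algebra_simps)
                also have "\<dots> = pe" using cc by simp
                finally show ?thesis .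
              qed
              then show ?thesis unfolding st using prod_e by simp
            next
              case jnP: False
              then have jU1: "j \<in> U1" using j by (simp add: U2_def)
              show ?thesis
              proof (cases "j = u")
                case ju: True
                have st: "{e'\<in>induced_edges E U2. u \<in> e'} = insert e {e'\<in>induced_edges E U1. u \<in> e'}"
                  using IE2 u by auto
                have "(\<Sum>e\<in>{e\<in>induced_edges E U2. j \<in> e}. \<Prod>i\<in>e. x i)
                      = pe + (\<Sum>e'\<in>{e'\<in>induced_edges E U1. u \<in> e'}. \<Prod>i\<in>e'. x' i)"
                  unfolding ju st using eN fIE1 prod_e sum_U1[of u] by simp
                also have "\<dots> = pe + lam * s' u * x' u ^ k" using x'eq True by simp
                also have "\<dots> = lam * s u * x u ^ k"
                  using x_U1[OF True] by (simp add: pe_def s'_def algebra_simps)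
                finally show ?thesis using ju by simp
              next
                case jnu: False
                have "j \<notin> e" using jnP jnu eq_e by auto
                then have st: "{e'\<in>induced_edges E U2. j \<in> e'} = {e'\<in>induced_edges E U1. j \<in> e'}"
                  using IE2 by auto
                have ss: "s' j = s j" using jnu by (simp add: s'_def)
                show ?thesis unfolding st sum_U1 x_U1[OF jU1] using x'eq[rule_format, OF jU1] unfolding ss .
              qed
            qed
          qed
          show "\<forall>e'\<in>induced_edges E U. \<not> e' \<subseteq> U2 \<longrightarrow> card (e' \<inter> U2) \<le> 1"
          proof (intro ballI impI)
            fix e' assume e': "e' \<in> induced_edges E U" "\<not> e' \<subseteq> U2"
            then have ne: "e' \<noteq> e" using eU2 by auto
            then have eP: "e' \<inter> P = {}" using other e' by auto
            have "e' \<in> induced_edges E U'" using IE' e' ne by auto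
            moreover have "\<not> e' \<subseteq> U1" using e' by (auto simp: U2_def)
            ultimately have "card (e' \<inter> U1) \<le> 1" using cond by auto
            moreover have "e' \<inter> U2 = e' \<inter> U1" using eP by (auto simp: U2_def)
            ultimately show "card (e' \<inter> U2) \<le> 1" by simp
          qed
        qed
      qed
    qed
  qed
qed



lemma tensor_sum:
  fixes x :: "'a \<Rightarrow> complex"
  assumes unif: "\<forall>e\<in>E. e \<subseteq> V \<and> card e = k" and fV: "finite V" and k1: "k \<ge> 1"
  shows "(\<Sum>ixs\<in>{ixs. set ixs \<subseteq> V \<and> length ixs = k - 1}. adj_tensor k E (j # ixs) * (\<Prod>i\<leftarrow>ixs. x i))
       = (\<Sum>e\<in>{e\<in>E. j \<in> e}. \<Prod>i\<in>e - {j}. x i)"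
proof -
  define L where "L = {ixs. set ixs \<subseteq> V \<and> length ixs = k - 1}"
  define Ej where "Ej = {e\<in>E. j \<in> e}"
  define c where "c = 1 / (of_nat (fact (k - 1)) :: complex)"
  have fL: "finite L" using fV by (simp add: L_def finite_lists_length_eq)
  have "(\<Sum>ixs\<in>L. adj_tensor k E (j # ixs) * (\<Prod>i\<leftarrow>ixs. x i))
      = (\<Sum>ixs\<in>L. if set (j # ixs) \<in> E then c * (\<Prod>i\<leftarrow>ixs. x i) else 0)"
    by (rule sum.cong) (auto simp: adj_tensor_def c_def)
  also have "\<dots> = (\<Sum>ixs\<in>{ixs\<in>L. set (j # ixs) \<in> E}. c * (\<Prod>i\<leftarrow>ixs. x i))"
    using fL by (simp add: sum.inter_filter)
  also have "{ixs\<in>L. set (j # ixs) \<in> E} = (\<Union>e\<in>Ej. permutations_of_set (e - {j}))"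
  proof
    show "{ixs\<in>L. set (j # ixs) \<in> E} \<subseteq> (\<Union>e\<in>Ej. permutations_of_set (e - {j}))"
    proof
      fix ixs assume a: "ixs \<in> {ixs\<in>L. set (j # ixs) \<in> E}"
      then have inE: "set (j # ixs) \<in> E" and len: "length ixs = k - 1" by (auto simp: L_def)
      then have "card (set (j # ixs)) = length (j # ixs)" using unif k1 by auto
      then have d: "distinct (j # ixs)" by (rule card_distinct)
      then have "ixs \<in> permutations_of_set (set (j # ixs) - {j})"
        by (auto simp: permutations_of_set_def)
      moreover have "set (j # ixs) \<in> Ej" using inE by (simp add: Ej_def)
      ultimately show "ixs \<in> (\<Union>e\<in>Ej. permutations_of_set (e - {j}))" by blast
    qed
    show "(\<Union>e\<in>Ej. permutations_of_set (e - {j})) \<subseteq> {ixs\<in>L. set (j # ixs) \<in> E}"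
    proof
      fix ixs assume "ixs \<in> (\<Union>e\<in>Ej. permutations_of_set (e - {j}))"
      then obtain e where e: "e \<in> E" "j \<in> e" "set ixs = e - {j}" "distinct ixs"
        by (auto simp: Ej_def permutations_of_set_def)
      have fe: "finite e" using unif e fV finite_subset by blast
      have "length ixs = k - 1" using e fe unif distinct_card[OF e(4)] by simp
      moreover have "set ixs \<subseteq> V" using e unif by auto
      moreover have "set (j # ixs) = e" using e by auto
      ultimately show "ixs \<in> {ixs\<in>L. set (j # ixs) \<in> E}" using e by (simp add: L_def)
    qed
  qed
  also have "(\<Sum>ixs\<in>(\<Union>e\<in>Ej. permutations_of_set (e - {j})). c * (\<Prod>i\<leftarrow>ixs. x i))
      = (\<Sum>e\<in>Ej. \<Sum>ixs\<in>permutations_of_set (e - {j}). c * (\<Prod>i\<leftarrow>ixs. x i))"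
  proof (rule sum.UNION_disjoint)
    have "Ej \<subseteq> Pow V" using unif by (auto simp: Ej_def)
    then show "finite Ej" using fV by (meson finite_Pow_iff finite_subset)
    show "\<forall>e\<in>Ej. finite (permutations_of_set (e - {j}))" by simp
    show "\<forall>e\<in>Ej. \<forall>e'\<in>Ej. e \<noteq> e' \<longrightarrow> permutations_of_set (e - {j}) \<inter> permutations_of_set (e' - {j}) = {}"
      by (auto simp: Ej_def permutations_of_set_def)
  qed
  also have "\<dots> = (\<Sum>e\<in>Ej. \<Prod>i\<in>e - {j}. x i)"
  proof (rule sum.cong[OF refl])
    fix e assume e: "e \<in> Ej"
    have eE: "e \<in> E" using e by (simp add: Ej_def)
    then have "e \<subseteq> V" using unif by auto
    then have fe: "finite e" using fV by (rule finite_subset)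
    have ce: "card (e - {j}) = k - 1" using e fe unif by (auto simp: Ej_def)
    have "(\<Sum>ixs\<in>permutations_of_set (e - {j}). c * (\<Prod>i\<leftarrow>ixs. x i))
        = (\<Sum>ixs\<in>permutations_of_set (e - {j}). c * (\<Prod>i\<in>e - {j}. x i))"
    proof (rule sum.cong[OF refl])
      fix ixs assume "ixs \<in> permutations_of_set (e - {j})"
      then have "distinct ixs" "set ixs = e - {j}" by (auto simp: permutations_of_set_def)
      then show "c * (\<Prod>i\<leftarrow>ixs. x i) = c * (\<Prod>i\<in>e - {j}. x i)"
        by (metis prod.distinct_set_conv_list)
    qed
    also have "\<dots> = of_nat (fact (k - 1)) * c * (\<Prod>i\<in>e - {j}. x i)"
      using fe ce by simp
    also have "\<dots> = (\<Prod>i\<in>e - {j}. x i)" by (simp add: c_def)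
    finally show "(\<Sum>ixs\<in>permutations_of_set (e - {j}). c * (\<Prod>i\<leftarrow>ixs. x i)) = (\<Prod>i\<in>e - {j}. x i)" .
  qed
  finally show ?thesis by (simp add: L_def Ej_def)
qed

lemma matchings_eq: "matchings F i = {M\<in>msets F. card M = i}"
  by (auto simp: matchings_def msets_def)

lemma mpoly_W:
  fixes lam :: complex
  assumes fU: "finite U" and lam: "lam \<noteq> 0"
  shows "poly (matching_poly k (induced_edges E U)) lam
         = lam ^ (max_matching_size (induced_edges E U) * k) * Wf (1 / lam ^ k) E (\<lambda>_. 1) U"
proof -
  define F where "F = induced_edges E U"
  define m where "m = max_matching_size F"
  define t where "t = 1 / lam ^ k"
  have fF: "finite F" using fU by (simp add: F_def finite_IE)
  have fms: "finite (msets F)" using fF by (rule finite_msets)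
  define I where "I = {i. matchings F i \<noteq> {}}"
  have fI: "finite I"
  proof (rule finite_subset[of _ "{..card F}"])
    show "I \<subseteq> {..card F}"
    proof
      fix i assume "i \<in> I"
      then obtain M where "M \<in> matchings F i" by (auto simp: I_def)
      then have "M \<subseteq> F" "card M = i" by (auto simp: matchings_def)
      then show "i \<in> {..card F}" using card_mono[OF fF] by auto
    qed
  qed simp
  have cardle: "card M \<le> m" if "M \<in> msets F" for M
  proof -
    have "M \<in> matchings F (card M)" using that by (simp add: matchings_eq)
    then have "card M \<in> I" by (auto simp: I_def)
    then show ?thesis using fI by (simp add: m_def max_matching_size_def I_def)
  qed
  have "Wf t E (\<lambda>_. 1) U = (\<Sum>M\<in>msets F. (-t) ^ card M)" by (simp add: Wf_def F_def)
  also have "\<dots> = (\<Sum>i\<in>{..m}. \<Sum>M\<in>{M\<in>msets F. card M = i}. (-t) ^ card M)"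
    by (rule sum.group[symmetric]) (use fms cardle in auto)
  also have "\<dots> = (\<Sum>i\<le>m. of_nat (card (matchings F i)) * (-t) ^ i)"
    by (rule sum.cong[OF refl]) (simp add: matchings_eq)
  finally have W: "Wf t E (\<lambda>_. 1) U = (\<Sum>i\<le>m. of_nat (card (matchings F i)) * (-t) ^ i)" .
  have "poly (matching_poly k F) lam = (\<Sum>i\<le>m. (-1) ^ i * of_nat (card (matchings F i)) * lam ^ ((m - i) * k))"
    by (simp add: matching_poly_def m_def poly_sum poly_monom Let_def)
  also have "\<dots> = (\<Sum>i\<le>m. lam ^ (m * k) * (of_nat (card (matchings F i)) * (-t) ^ i))"
  proof (rule sum.cong[OF refl])
    fix i assume "i \<in> {..m}"
    then have "m * k = (m - i) * k + i * k" by (simp add: add_mult_distrib[symmetric])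
    then have "lam ^ (m * k) = lam ^ ((m - i) * k) * (lam ^ k) ^ i" by (metis power_add power_mult mult.commute)
    then show "(-1) ^ i * of_nat (card (matchings F i)) * lam ^ ((m - i) * k)
        = lam ^ (m * k) * (of_nat (card (matchings F i)) * (-t) ^ i)"
      using lam by (simp add: t_def power_minus' power_divide field_simps)
  qed
  also have "\<dots> = lam ^ (m * k) * Wf t E (\<lambda>_. 1) U" by (simp add: W sum_distrib_left)
  finally show ?thesis by (simp add: F_def m_def t_def)
qed



lemma bpath_mono: "bpath F vs es \<Longrightarrow> F \<subseteq> G \<Longrightarrow> bpath G vs es"
  unfolding bpath_def by blast

lemma adj_rtrancl_sym: "(a, b) \<in> (hg_adj F)\<^sup>* \<Longrightarrow> (b, a) \<in> (hg_adj F)\<^sup>*"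
proof (induction rule: rtrancl_induct)
  case base then show ?case by simp
next
  case (step y z)
  then have "(z, y) \<in> hg_adj F" by (auto simp: hg_adj_def)
  then show ?case using step(3) by (rule converse_rtrancl_into_rtrancl)
qed

lemma component_walk:
  assumes "(a, v) \<in> (hg_adj (induced_edges E S))\<^sup>*" "a \<in> S"
  shows "(a, v) \<in> (hg_adj (induced_edges E {w\<in>S. (a, w) \<in> (hg_adj (induced_edges E S))\<^sup>*}))\<^sup>*"
  using assms(1)
proof (induction rule: rtrancl_induct)
  case base then show ?case by simp
next
  case (step y z)
  define C where "C = {w\<in>S. (a, w) \<in> (hg_adj (induced_edges E S))\<^sup>*}"
  from step(2) obtain f where f: "f \<in> induced_edges E S" "y \<in> f" "z \<in> f" by (auto simp: hg_adj_def)
  have "f \<subseteq> C"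
  proof
    fix w assume w: "w \<in> f"
    then have "(y, w) \<in> hg_adj (induced_edges E S)" using f by (auto simp: hg_adj_def)
    then have "(a, w) \<in> (hg_adj (induced_edges E S))\<^sup>*" using step(1) by (simp add: rtrancl_into_rtrancl)
    moreover have "w \<in> S" using f w by (auto simp: induced_edges_def)
    ultimately show "w \<in> C" by (simp add: C_def)
  qed
  then have "f \<in> induced_edges E C" using f by (auto simp: induced_edges_def)
  then have "(y, z) \<in> hg_adj (induced_edges E C)" using f by (auto simp: hg_adj_def)
  then show ?case using step(3) by (simp add: C_def)
qed

theorem theorem2:
  fixes k :: nat and V :: "'a set" and E :: "'a set set" and lam :: complex
  assumes "k_hypertree k V E" and "k \<ge> 3" and "lam \<noteq> 0"
  shows "hg_eigenvalue k V E lam \<longleftrightarrow>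
         (\<exists>U \<subseteq> V. hg_connected U (induced_edges E U) \<and>
                   poly (matching_poly k (induced_edges E U)) lam = 0)"
proof -
  have fV: "finite V" and EV: "\<forall>e\<in>E. e \<subseteq> V \<and> card e = k" and ac: "\<not> hg_has_cycle E"
    using assms(1) by (auto simp: k_hypertree_def k_uniform_def)
  have unif: "\<forall>e\<in>E. finite e \<and> card e = k" using EV fV finite_subset by blast
  have "E \<subseteq> Pow V" using EV by auto
  then have fE: "finite E" using fV by (simp add: finite_subset)
  have k1: "k \<ge> 1" and k2: "k \<ge> 2" using assms(2) by auto
  note lam = assms(3)
  define t where "t = 1 / lam ^ k"
  show ?thesis
  proof
    assume "hg_eigenvalue k V E lam"
    then obtain x where x0: "\<exists>v\<in>V. x v \<noteq> 0"
      and xeq: "\<forall>j\<in>V. (\<Sum>ixs\<in>{ixs. set ixs \<subseteq> V \<and> length ixs = k - 1}.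
               adj_tensor k E (j # ixs) * (\<Prod>i\<leftarrow>ixs. x i)) = lam * x j ^ (k - 1)"
      by (auto simp: hg_eigenvalue_def hg_eigenpair_def)
    have xeq2: "(\<Sum>e\<in>{e\<in>E. j \<in> e}. \<Prod>i\<in>e - {j}. x i) = lam * x j ^ (k - 1)" if "j \<in> V" for j
      using xeq that tensor_sum[OF EV fV k1, of j x] by simp
    define S where "S = {j\<in>V. x j \<noteq> 0}"
    obtain a where aS: "a \<in> S" using x0 by (auto simp: S_def)
    define R where "R = hg_adj (induced_edges E S)"
    define C where "C = {v\<in>S. (a, v) \<in> R\<^sup>*}"
    have CS: "C \<subseteq> S" by (auto simp: C_def)
    have SV: "S \<subseteq> V" by (auto simp: S_def)
    have fC: "finite C" using finite_subset[OF subset_trans[OF CS SV] fV] .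
    have aC: "a \<in> C" using aS by (simp add: C_def)
    have closure: "e \<subseteq> C" if "j \<in> C" "e \<in> E" "j \<in> e" "e \<subseteq> S" for j e
    proof
      fix v assume "v \<in> e"
      then have "(j, v) \<in> R" using that by (auto simp: R_def hg_adj_def induced_edges_def)
      moreover have "(a, j) \<in> R\<^sup>*" using that by (simp add: C_def)
      ultimately have "(a, v) \<in> R\<^sup>*" by (rule rtrancl_into_rtrancl[rotated])
      then show "v \<in> C" using \<open>v \<in> e\<close> that by (auto simp: C_def)
    qed
    have Ceq: "\<forall>j\<in>C. lam * (\<lambda>_. 1) j * x j ^ k = (\<Sum>e\<in>{e\<in>induced_edges E C. j \<in> e}. \<Prod>i\<in>e. x i)"
    proof
      fix j assume jC: "j \<in> C"
      then have jV: "j \<in> V" using CS SV by auto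
      have fEj: "finite {e\<in>E. j \<in> e}"
        using fE by simp
      have "(\<Sum>e\<in>{e\<in>E. j \<in> e}. \<Prod>i\<in>e. x i) = (\<Sum>e\<in>{e\<in>E. j \<in> e}. x j * (\<Prod>i\<in>e - {j}. x i))"
        by (rule sum.cong[OF refl]) (use unif in \<open>auto simp: prod.remove\<close>)
      also have "\<dots> = x j * (lam * x j ^ (k - 1))" unfolding sum_distrib_left[symmetric] xeq2[OF jV] ..
      also have "\<dots> = lam * x j ^ k" using k1 by (cases k) auto
      finally have A: "(\<Sum>e\<in>{e\<in>E. j \<in> e}. \<Prod>i\<in>e. x i) = lam * x j ^ k" .
      have "(\<Sum>e\<in>{e\<in>induced_edges E C. j \<in> e}. \<Prod>i\<in>e. x i) = (\<Sum>e\<in>{e\<in>E. j \<in> e}. \<Prod>i\<in>e. x i)"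
      proof (rule sum.mono_neutral_left[OF fEj])
        show "{e\<in>induced_edges E C. j \<in> e} \<subseteq> {e\<in>E. j \<in> e}" by (auto simp: induced_edges_def)
        show "\<forall>e\<in>{e\<in>E. j \<in> e} - {e\<in>induced_edges E C. j \<in> e}. (\<Prod>i\<in>e. x i) = 0"
        proof
          fix e assume e: "e \<in> {e\<in>E. j \<in> e} - {e\<in>induced_edges E C. j \<in> e}"
          then have "\<not> e \<subseteq> C" "e \<in> E" "j \<in> e" by (auto simp: induced_edges_def)
          then have "\<not> e \<subseteq> S" using closure jC by blast
          then obtain i where "i \<in> e" "i \<notin> S" by auto
          moreover have "e \<subseteq> V" using EV \<open>e \<in> E\<close> by auto
          ultimately have "i \<in> e" "x i = 0" by (auto simp: S_def)
          then show "(\<Prod>i\<in>e. x i) = 0" using unif \<open>e \<in> E\<close> by (auto intro: prod_zero)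
        qed
      qed
      then show "lam * (\<lambda>_. 1) j * x j ^ k = (\<Sum>e\<in>{e\<in>induced_edges E C. j \<in> e}. \<Prod>i\<in>e. x i)"
        using A by simp
    qed
    have xnz: "\<forall>j\<in>C. x j \<noteq> 0" using CS by (auto simp: S_def)
    have W: "Wf (1 / lam ^ k) E (\<lambda>_. 1) C = 0"
      using onlyif_lemma[OF ac unif k2 lam fC _ xnz Ceq] aC by auto
    have conn: "hg_connected C (induced_edges E C)"
      unfolding hg_connected_def
    proof (intro ballI)
      fix u v assume u: "u \<in> C" and v: "v \<in> C"
      have "(a, u) \<in> (hg_adj (induced_edges E C))\<^sup>*"
        using component_walk[of a u E S] u aS by (simp add: C_def R_def)
      then have "(u, a) \<in> (hg_adj (induced_edges E C))\<^sup>*" by (rule adj_rtrancl_sym)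
      moreover have "(a, v) \<in> (hg_adj (induced_edges E C))\<^sup>*"
        using component_walk[of a v E S] v aS by (simp add: C_def R_def)
      ultimately show "(u, v) \<in> (hg_adj (induced_edges E C))\<^sup>*" by (rule rtrancl_trans)
    qed
    have "poly (matching_poly k (induced_edges E C)) lam = 0"
      using mpoly_W[OF fC lam, of k E] W by simp
    then show "\<exists>U\<subseteq>V. hg_connected U (induced_edges E U) \<and> poly (matching_poly k (induced_edges E U)) lam = 0"
      using conn subset_trans[OF CS SV] by blast
  next
    assume "\<exists>U\<subseteq>V. hg_connected U (induced_edges E U) \<and> poly (matching_poly k (induced_edges E U)) lam = 0"
    then obtain U where UV: "U \<subseteq> V" and conn: "hg_connected U (induced_edges E U)"
      and root: "poly (matching_poly k (induced_edges E U)) lam = 0" by blast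
    have fU: "finite U" using finite_subset[OF UV fV] .
    have W: "Wf (1 / lam ^ k) E (\<lambda>_. 1) U = 0" using mpoly_W[OF fU lam, of k E] root lam by simp
    obtain U1 x' where U1: "U1 \<subseteq> U" "U1 \<noteq> {}" and x'nz: "\<forall>j\<in>U1. x' j \<noteq> 0"
      and x'eq: "\<forall>j\<in>U1. lam * (\<lambda>_. 1) j * x' j ^ k = (\<Sum>e\<in>{e\<in>induced_edges E U1. j \<in> e}. \<Prod>i\<in>e. x' i)"
      and cond: "\<forall>e\<in>induced_edges E U. \<not> e \<subseteq> U1 \<longrightarrow> card (e \<inter> U1) \<le> 1"
      using if_lemma[OF ac unif k2 lam fU W] by blast
    have K: "2 \<le> card (e - U1)" if e: "e \<in> E" "\<not> e \<subseteq> U1" for e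
    proof -
      have fe: "finite e" "card e = k" using unif e by auto
      have cd: "card (e - U1) = k - card (e \<inter> U1)" using fe by (simp add: card_Diff_subset_Int)
      show ?thesis
      proof (cases "e \<subseteq> U")
        case True
        then have "card (e \<inter> U1) \<le> 1" using cond e by (auto simp: induced_edges_def)
        then show ?thesis using cd assms(2) by linarith
      next
        case False
        show ?thesis
        proof (rule ccontr)
          assume "\<not> 2 \<le> card (e - U1)"
          then have "card (e \<inter> U1) \<ge> 2" using cd assms(2) card_mono[OF fe(1), of "e \<inter> U1"] fe by linarith
          then obtain a b where ab: "a \<in> e \<inter> U1" "b \<in> e \<inter> U1" "a \<noteq> b"
          proof -
            have fi: "finite (e \<inter> U1)" using fe by simp
            have "e \<inter> U1 \<noteq> {}" using \<open>card (e \<inter> U1) \<ge> 2\<close> by (cases "e \<inter> U1 = {}") auto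
            then obtain a where a: "a \<in> e \<inter> U1" by blast
            have "card (e \<inter> U1 - {a}) \<ge> 1" using fi a \<open>card (e \<inter> U1) \<ge> 2\<close> by (simp add: card_Diff_singleton)
            then have "e \<inter> U1 - {a} \<noteq> {}" by (cases "e \<inter> U1 - {a} = {}") auto
            then obtain b where "b \<in> e \<inter> U1 - {a}" by auto
            then show ?thesis using that a by auto
          qed
          have abU: "a \<in> U" "b \<in> U" using ab U1 by auto
          then have wab: "(a, b) \<in> (hg_adj (induced_edges E U))\<^sup>*" using conn unfolding hg_connected_def by blast
          obtain vs es where P: "bpath (induced_edges E U) vs es" "hd vs = a" "last vs = b"
            using walk_to_path[OF wab] by blast
          have "es \<noteq> []"
          proof
            assume "es = []"
            then have "length vs = 1" using P(1) by (simp add: bpath_def)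
            then obtain v where "vs = [v]" by (cases vs) auto
            then show False using P ab by simp
          qed
          moreover have "e \<notin> set es"
          proof
            assume "e \<in> set es"
            then have "e \<in> induced_edges E U" using P(1) unfolding bpath_def by blast
            then show False using False unfolding induced_edges_def by blast
          qed
          moreover have "bpath E vs es" using P(1) by (rule bpath_mono) (auto simp: induced_edges_def)
          moreover have "hd vs \<in> e" "last vs \<in> e" using P(2,3) ab by auto
          ultimately have "hg_has_cycle E"
            by (intro cycle_of_path[of E vs es e]) (use e in auto)
          then show False using ac by simp
        qed
      qed
    qed
    define x where "x i = (if i \<in> U1 then x' i else 0)" for i
    have zero_term: "(\<Prod>i\<in>e - {j}. x i) = 0" if e: "e \<in> E" "\<not> e \<subseteq> U1" for e j
    proof -
      have "2 \<le> card (e - U1)" using K e by blast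
      then have "card (e - U1 - {j}) \<ge> 1"
        using card_Diff_singleton_if[of "e - U1" j] unif e by (auto split: if_splits)
      then have "e - U1 - {j} \<noteq> {}" by (cases "e - U1 - {j} = {}") auto
      then obtain i where "i \<in> e - {j}" "i \<notin> U1" by auto
      then show ?thesis using unif e by (auto simp: x_def intro: prod_zero)
    qed
    have "hg_eigenpair k V E lam x"
      unfolding hg_eigenpair_def
    proof (intro conjI ballI)
      show "\<exists>v\<in>V. x v \<noteq> 0" using U1 UV x'nz by (auto simp: x_def)
      fix j assume jV: "j \<in> V"
      have fEj: "finite {e\<in>E. j \<in> e}"
        using fE by simp
      have "(\<Sum>e\<in>{e\<in>E. j \<in> e}. \<Prod>i\<in>e - {j}. x i) = lam * x j ^ (k - 1)"
      proof (cases "j \<in> U1")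
        case True
        have "(\<Sum>e\<in>{e\<in>E. j \<in> e}. \<Prod>i\<in>e - {j}. x i) = (\<Sum>e\<in>{e\<in>induced_edges E U1. j \<in> e}. \<Prod>i\<in>e - {j}. x i)"
        proof (rule sum.mono_neutral_right[OF fEj])
          show "{e\<in>induced_edges E U1. j \<in> e} \<subseteq> {e\<in>E. j \<in> e}" by (auto simp: induced_edges_def)
          show "\<forall>e\<in>{e\<in>E. j \<in> e} - {e\<in>induced_edges E U1. j \<in> e}. (\<Prod>i\<in>e - {j}. x i) = 0"
            using zero_term by (auto simp: induced_edges_def)
        qed
        also have "\<dots> = (\<Sum>e\<in>{e\<in>induced_edges E U1. j \<in> e}. \<Prod>i\<in>e - {j}. x' i)"
          by (rule sum.cong[OF refl], rule prod.cong[OF refl]) (auto simp: x_def induced_edges_def)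
        finally have A: "(\<Sum>e\<in>{e\<in>E. j \<in> e}. \<Prod>i\<in>e - {j}. x i) = (\<Sum>e\<in>{e\<in>induced_edges E U1. j \<in> e}. \<Prod>i\<in>e - {j}. x' i)" .
        have "(\<Sum>e\<in>{e\<in>induced_edges E U1. j \<in> e}. \<Prod>i\<in>e. x' i)
            = x' j * (\<Sum>e\<in>{e\<in>induced_edges E U1. j \<in> e}. \<Prod>i\<in>e - {j}. x' i)"
          unfolding sum_distrib_left
          by (rule sum.cong[OF refl]) (use unif in \<open>auto simp: prod.remove induced_edges_def\<close>)
        then have "x' j * (\<Sum>e\<in>{e\<in>induced_edges E U1. j \<in> e}. \<Prod>i\<in>e - {j}. x' i) = x' j * (lam * x' j ^ (k - 1))"
          using x'eq True k1 by (cases k) (auto simp: mult_ac)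
        then have "(\<Sum>e\<in>{e\<in>induced_edges E U1. j \<in> e}. \<Prod>i\<in>e - {j}. x' i) = lam * x' j ^ (k - 1)"
          using x'nz True by simp
        then show ?thesis using A True by (simp add: x_def)
      next
        case False
        have "(\<Sum>e\<in>{e\<in>E. j \<in> e}. \<Prod>i\<in>e - {j}. x i) = 0"
          by (rule sum.neutral) (use zero_term False in auto)
        moreover have "x j = 0" using False by (simp add: x_def)
        ultimately show ?thesis using k2 by simp
      qed
      then show "(\<Sum>ixs\<in>{ixs. set ixs \<subseteq> V \<and> length ixs = k - 1}. adj_tensor k E (j # ixs) * (\<Prod>i\<leftarrow>ixs. x i)) = lam * x j ^ (k - 1)"
        using tensor_sum[OF EV fV k1, of j x] by simp
    qed
    then show "hg_eigenvalue k V E lam" by (auto simp: hg_eigenvalue_def)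
  qed
qed


end
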